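(* Let $\mu$ be a probability measure on $(0,\infty)$, and for real $p$ let $\mu_p:=\int_{(0,\infty)}x^{p-2}\,\mu(\mathrm{d}x)\in(0,\infty]$. Define $L_\mu\colon(0,\infty)\to\mathbb{R}$ by $L_\mu(d):=\int_{(0,\infty)}\min\!\big(1,\tfrac{d}{x}\big)\,\mu(\mathrm{d}x)$. Fix $c\in(0,1)$. Then the equation $L_\mu(d)=c$ has a unique root $d\in(0,\infty)$; denote it by $\delta=\delta_\mu:=L_\mu^{-1}(c)$. If $\mu_3<\infty$, then $$\delta\le\delta_*:=\begin{cases} c\,\mu_3 & \text{if } 0<c\le\tfrac12,\\[4pt] \dfrac{\mu_3-(2c-1)^2/\mu_1}{4(1-c)} & \text{if } \tfrac12\le c<1.\end{cases}$$
   Context: Here $\mu_1=\int_{(0,\infty)}x^{-1}\,\mu(\mathrm{d}x)$ and $\mu_3=\int_{(0,\infty)}x\,\mu(\mathrm{d}x)$; if $\mu_1=\infty$, the term $(2c-1)^2/\mu_1$ is interpreted as $0$. The two formulas for $\delta_*$ agree at $c=\tfrac12$ (both equal $\mu_3/2$). *)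

theory Defs
  imports "HOL-Probability.Probability"
begin

text \<open>The probability measure mu on (0,infinity) is represented as a probability
measure M on the Borel sets of the reals that is concentrated on (0,infinity).\<close>

definition mu_mom :: "real measure \<Rightarrow> real \<Rightarrow> ennreal" where
  "mu_mom M p = (\<integral>\<^sup>+ x. ennreal (x powr (p - 2)) * indicator {0<..} x \<partial>M)"

definition L_mu :: "real measure \<Rightarrow> real \<Rightarrow> real" where
  "L_mu M d = (\<integral> x. min 1 (d / x) * indicator {0<..} x \<partial>M)"

definition delta_star :: "real measure \<Rightarrow> real \<Rightarrow> real" where
  "delta_star M c =
     (if c \<le> 1/2 then c * enn2real (mu_mom M 3)
      else (enn2real (mu_mom M 3)
             - (if mu_mom M 1 = \<infinity> then 0 else (2*c - 1)^2 / enn2real (mu_mom M 1)))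
           / (4 * (1 - c)))"

end

theory Submission
  imports Defs
begin

lemma L1: fixes d d' x :: real assumes "0 < d" "d \<le> d'" "0 < x"
  shows "0 \<le> min 1 (d'/x) - min 1 (d/x) \<and> min 1 (d'/x) - min 1 (d/x) \<le> (d'-d)/d"
proof -
  have a: "d/x \<le> d'/x" using assms by (simp add: divide_right_mono)
  have b: "min 1 (d'/x) - min 1 (d/x) \<le> (d'-d)/d"
  proof (cases "x \<le> d")
    case True then have "1 \<le> d/x" using assms by simp
    then show ?thesis using a assms by (simp add: min_def)
  next
    case False
    show ?thesis
    proof (cases "x \<le> d'")
      case True
      have "1 - d/x = (x-d)/x" using assms by (simp add: field_simps)
      also have "\<dots> \<le> (d'-d)/d" using assms False True by (simp add: frac_le)
      finally show ?thesis using True False assms by (simp add: min_def)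
    next
      case F2: False
      have "d'/x - d/x = (d'-d)/x" by (simp add: diff_divide_distrib)
      also have "\<dots> \<le> (d'-d)/d" using assms False by (simp add: frac_le)
      finally show ?thesis using F2 False assms by (simp add: min_def)
    qed
  qed
  show ?thesis using a b by linarith
qed

lemma L2: fixes d x c :: real assumes "0 < d" "0 < x" "0 < c" "c \<le> 1/2"
  shows "2*c - c^2*(x/d) \<le> min 1 (d/x)"
proof -
  define u where "u = x/d"
  have u: "u > 0" using assms u_def by simp
  have du: "d/x = 1/u" using u_def by simp
  have "0 \<le> (1 - c*u)^2 / u" using u by simp
  hence "2*c - c^2*u \<le> 1/u" using u by (simp add: field_simps power2_eq_square)
  moreover have "2*c - c^2*u \<le> 1" proof -
    have "0 \<le> c^2*u" using u by simp
    thus ?thesis using assms(4) by linarith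
  qed
  ultimately show ?thesis unfolding du u_def[symmetric] by simp
qed

lemma L3: fixes d x t :: real assumes "0 < d" "0 < x"
  shows "2*(1+t) - x/d - (1-t)^2*(d/x) \<le> 4*t*min 1 (d/x)"
proof -
  define u where "u = x/d"
  have u: "u > 0" using assms u_def by simp
  have du: "d/x = 1/u" using u_def by simp
  show ?thesis
  proof (cases "u \<le> 1")
    case True
    have "0 \<le> (u - (1-t))^2 / u" using u by simp
    hence "2*(1+t) - u - (1-t)^2*(1/u) \<le> 4*t" using u by (simp add: field_simps power2_eq_square)
    moreover have "min 1 (1/u) = 1" using True u by simp
    ultimately show ?thesis unfolding du u_def[symmetric] by simp
  next
    case False
    have "0 \<le> (u - (1+t))^2" by simp
    hence e: "2*(1+t)*u - u^2 - (1-t)^2 \<le> 4*t" by (simp add: power2_eq_square algebra_simps)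
    have "2*(1+t) - u - (1-t)^2*(1/u) = (2*(1+t)*u - u^2 - (1-t)^2)/u" using u by (simp add: field_simps power2_eq_square)
    also have "\<dots> \<le> 4*t/u" using e u by (simp add: divide_right_mono)
    finally have "2*(1+t) - u - (1-t)^2*(1/u) \<le> 4*t*(1/u)" by simp
    moreover have "min 1 (1/u) = 1/u" using False u by simp
    ultimately show ?thesis unfolding du u_def[symmetric] by simp
  qed
qed

lemma alg: fixes A B c \<delta> :: real
  assumes "0<\<delta>" "0<B" "c<1" 
    and H: "\<And>t. 2*(1+t) - A/\<delta> - (1-t)^2*\<delta>*B \<le> 4*t*c"
  shows "\<delta> \<le> (A - (2*c-1)^2/B)/(4*(1-c))"
proof -
  define k where "k = 2*c-1"
  define D where "D = \<delta>*B"
  have D: "D > 0" using assms D_def by simp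
  define t where "t = 1 - k/D"
  have h: "2*(1+t) - A/\<delta> - (1-t)^2*D \<le> 4*t*c" using H[of t] D_def by (simp add: mult.assoc)
  have omt: "1-t = k/D" using t_def by simp
  have e1: "(1-t)^2*D = k^2/D" unfolding omt using D by (simp add: power2_eq_square field_simps)
  have cc: "c = (1+k)/2" using k_def by simp
  have e2: "2*(1+t) - 4*t*c = 2 - 2*k + 2*(k^2/D)" unfolding t_def cc using D by (simp add: power2_eq_square field_simps)
  have "A/\<delta> \<ge> 4*(1-c) + k^2/D" proof -
    have "A/\<delta> \<ge> 2*(1+t) - 4*t*c - k^2/D" using h e1 by linarith
    moreover have "2*(1+t) - 4*t*c - k^2/D = 4*(1-c) + k^2/D"
    proof -
      have "2*(1+t) - 4*t*c - k^2/D = 2 - 2*k + 2*(k^2/D) - k^2/D" by (simp only: e2)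
      also have "\<dots> = 4*(1-c) + k^2/D" using cc by simp
      finally show ?thesis .
    qed
    ultimately show ?thesis by simp
  qed 
  hence "(4*(1-c) + k^2/D)*\<delta> \<le> A/\<delta>*\<delta>" using assms(1) by (intro mult_right_mono) auto
  hence "A \<ge> (4*(1-c) + k^2/D)*\<delta>" using assms(1) by simp
  also have "(4*(1-c) + k^2/D)*\<delta> = 4*(1-c)*\<delta> + k^2/B" using assms D_def by (simp add: field_simps)
  finally have "4*(1-c)*\<delta> \<le> A - k^2/B" by simp
  thus ?thesis using assms k_def by (simp add: pos_le_divide_eq mult.commute)
qed

theorem theorem1:
  fixes M :: "real measure" and c :: real
  assumes "prob_space M"
    and "sets M = sets borel"
    and "emeasure M {0<..} = 1"
    and "0 < c" and "c < 1"
  shows "(\<exists>!d. 0 < d \<and> L_mu M d = c)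
       \<and> (mu_mom M 3 < \<infinity> \<longrightarrow>
            (THE d. 0 < d \<and> L_mu M d = c) \<le> delta_star M c)"
proof -
  interpret prob_space M by (rule assms(1))
  have sp: "space M = UNIV" using sets_eq_imp_space_eq[OF assms(2)] by simp
  have meas: "\<And>g::real\<Rightarrow>real. g \<in> borel_measurable borel \<Longrightarrow> g \<in> borel_measurable M"
    using measurable_cong_sets[OF assms(2) refl, of "borel :: real measure"] by simp
  have P0: "measure M {0<..} = 1" using assms(3) by (simp add: measure_def)
  have intind: "integral\<^sup>L M (indicator {0<..}) = (1::real)" using P0 sp by simp
  define f where "f d x = min 1 (d/x) * indicator {0<..} x" for d x :: real
  have Ldef: "\<And>d. L_mu M d = integral\<^sup>L M (f d)" unfolding L_mu_def f_def by simp
  have fm: "\<And>d. f d \<in> borel_measurable M" unfolding f_def by (rule meas) measurable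
  have fb: "\<And>d x. 0 \<le> d \<Longrightarrow> 0 \<le> f d x \<and> f d x \<le> 1" unfolding f_def
    by (auto simp: indicator_def)
  have fi: "\<And>d. 0 \<le> d \<Longrightarrow> integrable M (f d)"
    by (rule integrable_const_bound[where B=1]) (use fb fm in auto)
  have indi: "integrable M (indicator {0<..} :: real \<Rightarrow> real)"
    by (rule integrable_const_bound[where B=1]) (auto intro: meas)
  have lip: "0 \<le> L_mu M d' - L_mu M d \<and> L_mu M d' - L_mu M d \<le> (d'-d)/d"
    if "0 < d" "d \<le> d'" for d d'
  proof -
    have pw: "0 \<le> f d' x - f d x \<and> f d' x - f d x \<le> (d'-d)/d" for x
      using L1[OF that, of x] that unfolding f_def by (cases "0 < x") auto
    have eq: "L_mu M d' - L_mu M d = integral\<^sup>L M (\<lambda>x. f d' x - f d x)"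
      unfolding Ldef using fi that by (simp add: Bochner_Integration.integral_diff)
    have i2: "integrable M (\<lambda>x. f d' x - f d x)" using fi that by simp
    have "integral\<^sup>L M (\<lambda>x. f d' x - f d x) \<le> integral\<^sup>L M (\<lambda>x. (d'-d)/d)"
      by (rule integral_mono) (use i2 pw in auto)
    moreover have "0 \<le> integral\<^sup>L M (\<lambda>x. f d' x - f d x)"
      by (rule integral_nonneg_AE) (use pw in auto)
    ultimately show ?thesis using eq prob_space by simp
  qed
  have cont: "continuous_on {a..b} (L_mu M)" if "0 < a" for a b
  proof -
    have "lipschitz_on (1/a) {a..b} (L_mu M)"
    proof (rule lipschitz_onI)
      fix x y assume xy: "x \<in> {a..b}" "y \<in> {a..b}"
      have g: "\<bar>L_mu M y - L_mu M x\<bar> \<le> \<bar>y - x\<bar> / a" if "x \<le> y" "x \<in> {a..b}" for x y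
      proof -
        have "x > 0" using that \<open>0<a\<close> by simp
        from lip[OF this \<open>x\<le>y\<close>] have "\<bar>L_mu M y - L_mu M x\<bar> \<le> (y-x)/x" by simp
        also have "\<dots> \<le> (y-x)/a" using that \<open>0<a\<close> by (simp add: frac_le)
        finally show ?thesis using that by simp
      qed
      show "dist (L_mu M x) (L_mu M y) \<le> 1 / a * dist x y"
        using g[of x y] g[of y x] xy by (cases "x \<le> y") (auto simp: dist_real_def abs_minus_commute)
    next
      show "0 \<le> 1/a" using that by simp
    qed
    thus ?thesis by (rule lipschitz_on_continuous_on)
  qed
  have lim0: "(\<lambda>n. L_mu M (1/(real n + 1))) \<longlonglongrightarrow> 0"
  proof -
    have "(\<lambda>n. integral\<^sup>L M (f (1/(real n + 1)))) \<longlonglongrightarrow> integral\<^sup>L M (\<lambda>x. 0::real)"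
    proof (rule integral_dominated_convergence[where w="\<lambda>x. 1"])
      show "AE x in M. (\<lambda>n. f (1/(real n + 1)) x) \<longlonglongrightarrow> 0"
      proof (rule AE_I2)
        fix x :: real
        show "(\<lambda>n. f (1/(real n + 1)) x) \<longlonglongrightarrow> 0"
        proof (cases "0 < x")
          case True
          have "(\<lambda>n. 1/(real n + 1)) \<longlonglongrightarrow> 0" using LIMSEQ_inverse_real_of_nat by (simp add: inverse_eq_divide add.commute)
          then have "(\<lambda>n. min 1 ((1/(real n + 1))/x) * 1) \<longlonglongrightarrow> min 1 (0/x) * 1"
            by (intro tendsto_intros) (use True in auto)
          then show ?thesis using True unfolding f_def by simp
        next
          case False then show ?thesis unfolding f_def by simp
        qed
      qed
      show "\<And>i. AE x in M. norm (f (1/(real i + 1)) x) \<le> 1" using fb by simp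
    qed (use fm in auto)
    thus ?thesis unfolding Ldef by simp
  qed
  have lim1: "(\<lambda>n. L_mu M (real n + 1)) \<longlonglongrightarrow> 1"
  proof -
    have "(\<lambda>n. integral\<^sup>L M (f (real n + 1))) \<longlonglongrightarrow> integral\<^sup>L M (indicator {0<..} :: real \<Rightarrow> real)"
    proof (rule integral_dominated_convergence[where w="\<lambda>x. 1"])
      show "AE x in M. (\<lambda>n. f (real n + 1) x) \<longlonglongrightarrow> indicator {0<..} x"
      proof (rule AE_I2)
        fix x :: real
        show "(\<lambda>n. f (real n + 1) x) \<longlonglongrightarrow> indicator {0<..} x"
        proof (cases "0 < x")
          case True
          have "eventually (\<lambda>n. f (real n + 1) x = indicator {0<..} x) sequentially"
          proof (rule eventually_sequentiallyI[of "nat \<lceil>x\<rceil>"])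
            fix n assume "nat \<lceil>x\<rceil> \<le> n"
            hence "x \<le> real n + 1" by linarith
            thus "f (real n + 1) x = indicator {0<..} x" using True unfolding f_def by simp
          qed
          then show ?thesis by (rule tendsto_eventually)
        next
          case False then show ?thesis unfolding f_def by simp
        qed
      qed
      show "\<And>i. AE x in M. norm (f (real i + 1) x) \<le> 1" using fb by simp
    qed (use fm indi in auto)
    thus ?thesis unfolding Ldef intind by simp
  qed
  obtain n0 where n0: "L_mu M (1/(real n0 + 1)) < c"
    using order_tendstoD(2)[OF lim0 assms(4)] by (meson eventually_sequentially order_refl)
  obtain n1 where n1: "L_mu M (real n1 + 1) > c"
    using order_tendstoD(1)[OF lim1 assms(5)] by (meson eventually_sequentially order_refl)
  have ab: "1/(real n0 + 1) \<le> real n1 + 1"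
  proof -
    have "1/(real n0 + 1) \<le> 1" by simp
    thus ?thesis by linarith
  qed
  obtain d0 where d0: "1/(real n0 + 1) \<le> d0" "d0 \<le> real n1 + 1" "L_mu M d0 = c"
    using IVT'[of "L_mu M" "1/(real n0 + 1)" c "real n1 + 1", OF less_imp_le[OF n0] less_imp_le[OF n1] ab
        cont] by auto
  have d0p: "0 < d0" proof -
    have "0 < 1/(real n0 + 1)" by simp
    thus ?thesis using d0(1) by linarith
  qed
  have uniq: "d1 = d2" if "0 < d1" "L_mu M d1 = c" "0 < d2" "L_mu M d2 = c" for d1 d2
  proof (rule ccontr)
    assume "d1 \<noteq> d2"
    have key: False if "0 < a" "a < b" "L_mu M a = c" "L_mu M b = c" for a b
    proof -
      have i2: "integrable M (\<lambda>x. f b x - f a x)" using fi that by simp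
      have nn: "AE x in M. 0 \<le> f b x - f a x" using L1[of a b] that unfolding f_def
        by (intro AE_I2) (auto simp: indicator_def)
      have "integral\<^sup>L M (\<lambda>x. f b x - f a x) = 0"
        using that fi unfolding Ldef by (simp add: Bochner_Integration.integral_diff)
      hence ae: "AE x in M. f b x - f a x = 0" using integral_nonneg_eq_0_iff_AE[OF i2 nn] by simp
      have "AE x in M. f a x = indicator {0<..} x"
      proof (rule AE_mp[OF ae], rule AE_I2, rule impI)
        fix x assume h: "f b x - f a x = 0"
        show "f a x = indicator {0<..} x"
        proof (cases "0 < x")
          case True
          have "x \<le> a"
          proof (rule ccontr)
            assume "\<not> x \<le> a"
            hence "a/x < 1" using True by simp
            moreover have "a/x < b/x" using True that by (simp add: divide_strict_right_mono)
            ultimately show False using h True unfolding f_def by (simp add: min_def split: if_splits)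
          qed
          thus ?thesis using True unfolding f_def by simp
        next
          case False thus ?thesis unfolding f_def by simp
        qed
      qed
      hence "L_mu M a = 1" unfolding Ldef using intind integral_cong_AE[of "f a" M "indicator {0<..}"] fm indi
        by (metis borel_measurable_integrable)
      thus False using that assms(5) by simp
    qed
    show False
    proof (cases "d1 < d2")
      case True thus ?thesis using key[of d1 d2] that by simp
    next
      case False thus ?thesis using key[of d2 d1] that \<open>d1 \<noteq> d2\<close> by simp
    qed
  qed
  have EU: "\<exists>!d. 0 < d \<and> L_mu M d = c" using d0p d0(3) uniq by blast
  define \<delta> where "\<delta> = (THE d. 0 < d \<and> L_mu M d = c)"
  have \<delta>: "0 < \<delta>" "L_mu M \<delta> = c" using theI'[OF EU] unfolding \<delta>_def by auto
  have part2: "\<delta> \<le> delta_star M c" if fin: "mu_mom M 3 < \<infinity>"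
  proof -
    define h where "h x = x * indicator {0<..} x" for x :: real
    have hm: "h \<in> borel_measurable M" unfolding h_def by (rule meas) measurable
    have hnn: "\<And>x. 0 \<le> h x" unfolding h_def by (simp add: indicator_def)
    have m3: "mu_mom M 3 = (\<integral>\<^sup>+ x. ennreal (h x) \<partial>M)"
      unfolding mu_mom_def h_def by (rule nn_integral_cong) (auto simp: indicator_def)
    have hi: "integrable M h"
      by (rule integrableI_bounded) (use hm hnn m3 fin in auto)
    define A where "A = integral\<^sup>L M h"
    have A: "enn2real (mu_mom M 3) = A"
      using m3 nn_integral_eq_integral[OF hi] hnn A_def by (simp add: integral_nonneg_AE)
    show ?thesis
    proof (cases "c \<le> 1/2")
      case True
      have pw: "2*c*indicator {0<..} x - (c^2/\<delta>) * h x \<le> f \<delta> x" for x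
        using L2[OF \<delta>(1) _ assms(4) True, of x] unfolding f_def h_def
        by (cases "0 < x") (auto simp: field_simps)
      have "integral\<^sup>L M (\<lambda>x. 2*c*indicator {0<..} x - (c^2/\<delta>) * h x) \<le> integral\<^sup>L M (f \<delta>)"
        by (rule integral_mono) (use pw fi \<delta> hi indi in auto)
      hence "2*c - (c^2/\<delta>)*A \<le> c" using hi indi \<delta> intind unfolding A_def Ldef by simp
      hence "c \<le> (c^2/\<delta>)*A" by simp
      hence "c*\<delta> \<le> c^2*A" using \<delta> by (simp add: field_simps)
      hence "\<delta> \<le> c*A" using assms(4) by (simp add: power2_eq_square mult.assoc)
      thus ?thesis unfolding delta_star_def using True A by simp
    next
      case False
      show ?thesis
      proof (cases "mu_mom M 1 = \<infinity>")
        case True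
        have pw: "4*indicator {0<..} x - h x/\<delta> \<le> 4 * f \<delta> x" for x
          using L3[OF \<delta>(1), of x 1] unfolding f_def h_def
          by (cases "0 < x") auto
        have "integral\<^sup>L M (\<lambda>x. 4*indicator {0<..} x - h x/\<delta>) \<le> integral\<^sup>L M (\<lambda>x. 4 * f \<delta> x)"
          by (rule integral_mono) (use pw fi \<delta> hi indi in auto)
        hence "4 - A/\<delta> \<le> 4*c" using hi indi \<delta> intind unfolding A_def Ldef by simp
        hence "4*(1-c)*\<delta> \<le> A" using \<delta> by (simp add: field_simps)
        hence "\<delta> \<le> A/(4*(1-c))" using assms(5) by (simp add: pos_le_divide_eq mult.commute)
        thus ?thesis unfolding delta_star_def using True False A by simp
      next
        case fin1: False
        define h1 where "h1 x = (1/x) * indicator {0<..} x" for x :: real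
        have h1m: "h1 \<in> borel_measurable M" unfolding h1_def by (rule meas) measurable
        have h1nn: "\<And>x. 0 \<le> h1 x" unfolding h1_def by (simp add: indicator_def)
        have m1: "mu_mom M 1 = (\<integral>\<^sup>+ x. ennreal (h1 x) \<partial>M)"
          unfolding mu_mom_def h1_def by (rule nn_integral_cong) (auto simp: indicator_def powr_minus_divide)
        have h1i: "integrable M h1"
          by (rule integrableI_bounded) (use h1m h1nn m1 fin1 in \<open>auto simp: less_top\<close>)
        define B where "B = integral\<^sup>L M h1"
        have B: "enn2real (mu_mom M 1) = B"
          using m1 nn_integral_eq_integral[OF h1i] h1nn B_def by (simp add: integral_nonneg_AE)
        have i3: "integrable M (\<lambda>x. \<delta> * h1 x)" using h1i by simp
        have "integral\<^sup>L M (f \<delta>) \<le> integral\<^sup>L M (\<lambda>x. \<delta> * h1 x)"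
          by (rule integral_mono[OF fi[OF less_imp_le[OF \<delta>(1)]] i3]) (use \<delta> in \<open>auto simp: f_def h1_def indicator_def\<close>)
        hence cB: "c \<le> \<delta> * B" using \<delta> h1i unfolding Ldef B_def by simp
        have Bp: "0 < B"
        proof (rule ccontr)
          assume "\<not> 0 < B" hence "\<delta> * B \<le> 0" using \<delta> by (simp add: mult_nonneg_nonpos)
          thus False using cB assms(4) by simp
        qed
        have H: "2*(1+t) - A/\<delta> - (1-t)^2*\<delta>*B \<le> 4*t*c" for t
        proof -
          have pw: "2*(1+t)*indicator {0<..} x - h x/\<delta> - ((1-t)^2*\<delta>) * h1 x \<le> 4*t * f \<delta> x" for x
            using L3[OF \<delta>(1), of x t] unfolding f_def h_def h1_def
            by (cases "0 < x") (auto simp: field_simps)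
          have "integral\<^sup>L M (\<lambda>x. 2*(1+t)*indicator {0<..} x - h x/\<delta> - ((1-t)^2*\<delta>) * h1 x)
              \<le> integral\<^sup>L M (\<lambda>x. 4*t * f \<delta> x)"
            by (rule integral_mono) (use pw fi \<delta> hi h1i indi in auto)
          thus ?thesis using hi h1i indi \<delta> intind unfolding A_def B_def Ldef by simp
        qed
        have "\<delta> \<le> (A - (2*c-1)^2/B)/(4*(1-c))" by (rule alg[OF \<delta>(1) Bp assms(5) H])
        thus ?thesis unfolding delta_star_def using False fin1 A B by simp
      qed
    qed
  qed
  show ?thesis using EU part2 unfolding \<delta>_def by blast
qed

end
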